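(* Let $\mathbf{X}$ be a binary matrix. If the rectangle cover graph $\mathcal{G}(\mathbf{X})$ contains an odd antihole with at least $7$ vertices (as an induced subgraph), then $\mathbf{X}$ has a submatrix which, after permuting its rows and columns, equals $\mathbf{W}$ or $\overline{\mathbf{I}}_4$.
   Context: For a binary matrix $\mathbf{X}$, $\mathrm{supp}(\mathbf{X})=\{(i,j):x_{i,j}=1\}$; a submatrix is obtained by deleting rows and columns; a rectangle is a set $I\times J\subseteq\mathrm{supp}(\mathbf{X})$. The rectangle cover graph $\mathcal{G}(\mathbf{X})$ has vertex set $\mathrm{supp}(\mathbf{X})$, two vertices being adjacent iff some rectangle of $\mathbf{X}$ contains both. A hole is an induced chordless cycle of length at least $4$; an odd antihole is an induced subgraph whose complement is a hole of odd length. Let $\mathbf{C}_3$ be the $3\times 3$ binary matrix with $1$s exactly at $(1,1),(1,2),(2,2),(2,3),(3,1),(3,3)$, and $\mathbf{1}$ the all-ones column vector of length $3$. Then $\mathbf{W}=\begin{bmatrix}\mathbf{C}_3&\mathbf{1}\\ \mathbf{1}^\top&1\end{bmatrix}$ and $\overline{\mathbf{I}}_4=\begin{bmatrix}\mathbf{C}_3&\mathbf{1}\\ \mathbf{1}^\top&0\end{bmatrix}$, both in $\{0,1\}^{4\times4}$. *)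

theory Defs
  imports Main
begin

text \<open>A binary m x n matrix is represented as X :: nat => nat => bool together with
  its dimensions m n; entry (i,j) for i < m, j < n (0-indexed); True means 1.\<close>

definition supp :: "(nat \<Rightarrow> nat \<Rightarrow> bool) \<Rightarrow> nat \<Rightarrow> nat \<Rightarrow> (nat \<times> nat) set" where
  "supp X m n = {(i, j). i < m \<and> j < n \<and> X i j}"

definition is_rectangle :: "(nat \<Rightarrow> nat \<Rightarrow> bool) \<Rightarrow> nat \<Rightarrow> nat \<Rightarrow> (nat \<times> nat) set \<Rightarrow> bool" where
  "is_rectangle X m n R \<longleftrightarrow> (\<exists>I J. R = I \<times> J \<and> R \<subseteq> supp X m n)"

definition rc_adj :: "(nat \<Rightarrow> nat \<Rightarrow> bool) \<Rightarrow> nat \<Rightarrow> nat \<Rightarrow> nat \<times> nat \<Rightarrow> nat \<times> nat \<Rightarrow> bool" where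
  "rc_adj X m n u v \<longleftrightarrow> u \<in> supp X m n \<and> v \<in> supp X m n \<and> u \<noteq> v \<and>
     (\<exists>R. is_rectangle X m n R \<and> u \<in> R \<and> v \<in> R)"

text \<open>Induced odd antihole on k vertices v 0, ..., v (k-1): the complement of the induced
  subgraph is the cycle v 0 - v 1 - ... - v (k-1) - v 0, i.e. two distinct listed vertices are
  adjacent iff they are not cyclically consecutive.\<close>
definition rc_has_odd_antihole_ge7 :: "(nat \<Rightarrow> nat \<Rightarrow> bool) \<Rightarrow> nat \<Rightarrow> nat \<Rightarrow> bool" where
  "rc_has_odd_antihole_ge7 X m n \<longleftrightarrow>
     (\<exists>k (v :: nat \<Rightarrow> nat \<times> nat). odd k \<and> 7 \<le> k \<and> inj_on v {..<k} \<and>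
        v ` {..<k} \<subseteq> supp X m n \<and>
        (\<forall>a<k. \<forall>b<k. a \<noteq> b \<longrightarrow>
           (rc_adj X m n (v a) (v b) \<longleftrightarrow> \<not> (b = (a + 1) mod k \<or> a = (b + 1) mod k))))"

definition C3 :: "nat \<Rightarrow> nat \<Rightarrow> bool" where
  "C3 i j \<longleftrightarrow> (i, j) \<in> {(0,0),(0,1),(1,1),(1,2),(2,0),(2,2)}"

definition W_mat :: "nat \<Rightarrow> nat \<Rightarrow> bool" where
  "W_mat i j = (if i < 3 \<and> j < 3 then C3 i j else True)"

definition Ibar4_mat :: "nat \<Rightarrow> nat \<Rightarrow> bool" where
  "Ibar4_mat i j = (if i < 3 \<and> j < 3 then C3 i j else \<not> (i = 3 \<and> j = 3))"

definition has_perm_submatrix4 ::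
  "(nat \<Rightarrow> nat \<Rightarrow> bool) \<Rightarrow> nat \<Rightarrow> nat \<Rightarrow> (nat \<Rightarrow> nat \<Rightarrow> bool) \<Rightarrow> bool" where
  "has_perm_submatrix4 X m n M \<longleftrightarrow>
     (\<exists>r c. inj_on r {..<4} \<and> inj_on c {..<4} \<and> r ` {..<4} \<subseteq> {..<m} \<and> c ` {..<4} \<subseteq> {..<n} \<and>
        (\<forall>i<4. \<forall>j<4. X (r i) (c j) = M i j))"

end

theory Submission imports Defs begin

lemma all4: "(\<forall>i<(4::nat). P i) \<longleftrightarrow> P 0 \<and> P 1 \<and> P 2 \<and> P 3"
  by (auto simp: less_Suc_eq numeral_eq_Suc)

lemma inj4: "distinct [a,b,c,d] \<Longrightarrow> inj_on (\<lambda>i. [a,b,c,d] ! i) {..<(4::nat)}"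
  unfolding inj_on_def by (auto simp: less_Suc_eq numeral_eq_Suc)

lemma img4: "a < m \<Longrightarrow> b < m \<Longrightarrow> c < m \<Longrightarrow> d < m \<Longrightarrow> (\<lambda>i. [a,b,c,d] ! i) ` {..<(4::nat)} \<subseteq> {..<m}"
  by (auto simp: less_Suc_eq numeral_eq_Suc)

lemma core:
  assumes b: "r0 < m" "r1 < m" "r4 < m" "r5 < m" "c1 < n" "c2 < n" "c4 < n" "c5 < n"
  and z: "\<not> X r0 c1" "\<not> X r1 c2" "\<not> X r4 c5 \<or> \<not> X r5 c4"
  and o: "X r0 c2" "X r0 c4" "X r0 c5" "X r1 c1" "X r1 c4" "X r1 c5"
         "X r4 c1" "X r4 c2" "X r4 c4" "X r5 c1" "X r5 c2" "X r5 c5"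
  shows "has_perm_submatrix4 X m n W_mat \<or> has_perm_submatrix4 X m n Ibar4_mat"
proof (cases "X r4 c5 \<and> \<not> X r5 c4")
  case True
  have "has_perm_submatrix4 X m n W_mat"
    unfolding has_perm_submatrix4_def
    apply (rule exI[of _ "\<lambda>i. [r0,r1,r5,r4] ! i"], rule exI[of _ "\<lambda>i. [c2,c4,c1,c5] ! i"])
    apply (intro conjI inj4 img4)
    using b z o True by (auto simp: all4 W_mat_def Ibar4_mat_def C3_def)
  then show ?thesis ..
next
  case False
  then have n45: "\<not> X r4 c5" using z by blast
  have "has_perm_submatrix4 X m n (if X r5 c4 then W_mat else Ibar4_mat)"
    unfolding has_perm_submatrix4_def
    apply (rule exI[of _ "\<lambda>i. [r0,r1,r4,r5] ! i"], rule exI[of _ "\<lambda>i. [c2,c5,c1,c4] ! i"])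
    apply (intro conjI inj4 img4)
    using b z o n45 by (auto simp: all4 W_mat_def Ibar4_mat_def C3_def)
  then show ?thesis by (auto split: if_splits)
qed

lemma modne: "0 < e \<Longrightarrow> e < (k::nat) \<Longrightarrow> (x + e) mod k \<noteq> x mod k"
  by (metis add_diff_cancel_left' le_add1 mod_eq_dvd_iff_nat nat_dvd_not_less)

lemma rc_adj_iff: "u \<in> supp X m n \<Longrightarrow> v \<in> supp X m n \<Longrightarrow> u \<noteq> v \<Longrightarrow>
   rc_adj X m n u v \<longleftrightarrow> X (fst u) (snd v) \<and> X (fst v) (snd u)"
proof
  assume "rc_adj X m n u v"
  then obtain I J where "u \<in> I \<times> J" "v \<in> I \<times> J" "I \<times> J \<subseteq> supp X m n"
    unfolding rc_adj_def is_rectangle_def by blast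
  then show "X (fst u) (snd v) \<and> X (fst v) (snd u)"
    unfolding supp_def by (cases u, cases v) auto
next
  assume h: "u \<in> supp X m n" "v \<in> supp X m n" "u \<noteq> v" "X (fst u) (snd v) \<and> X (fst v) (snd u)"
  obtain a b a' b' where uv: "u = (a,b)" "v = (a',b')" by (cases u, cases v) auto
  have sub: "{a, a'} \<times> {b, b'} \<subseteq> supp X m n"
    using h unfolding uv supp_def by auto
  show "rc_adj X m n u v" unfolding rc_adj_def is_rectangle_def
    using h(1-3) sub uv by blast
qed

lemma parity:
  fixes P :: "nat \<Rightarrow> bool"
  assumes "odd (k::nat)" "\<And>a. P (a + k) = P a"
  shows "\<exists>a. P a = P (Suc a)"
proof (rule ccontr)
  assume "\<not> ?thesis"
  then have h: "\<And>a. P (Suc a) = (\<not> P a)" by blast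
  have "\<And>a. P a = (P 0 = even a)"
  proof -
    fix a show "P a = (P 0 = even a)" by (induction a) (auto simp: h)
  qed
  from this[of k] assms show False by (metis add_0)
qed

theorem lemma4:
  fixes X :: "nat \<Rightarrow> nat \<Rightarrow> bool" and m n :: nat
  assumes "rc_has_odd_antihole_ge7 X m n"
  shows "has_perm_submatrix4 X m n W_mat \<or> has_perm_submatrix4 X m n Ibar4_mat"
proof -
  obtain k and v :: "nat \<Rightarrow> nat \<times> nat" where ok: "odd k" and k7: "7 \<le> k" and inj: "inj_on v {..<k}"
    and vs: "v ` {..<k} \<subseteq> supp X m n"
    and ah: "\<forall>a<k. \<forall>b<k. a \<noteq> b \<longrightarrow>
           (rc_adj X m n (v a) (v b) \<longleftrightarrow> \<not> (b = (a + 1) mod k \<or> a = (b + 1) mod k))"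
    using assms unfolding rc_has_odd_antihole_ge7_def by blast
  define w where "w x = v (x mod k)" for x
  define R where "R x = fst (w x)" for x
  define C where "C x = snd (w x)" for x
  have kpos: "0 < k" using k7 by simp
  have ws: "w x \<in> supp X m n" for x unfolding w_def using vs kpos by auto
  have bds: "R x < m" "C x < n" "X (R x) (C x)" for x
    using ws[of x] unfolding supp_def R_def C_def by auto
  have wk: "w (x + k) = w x" for x unfolding w_def by simp
  have mk: "(y mod k + 1) mod k = (y + 1) mod k" for y by (simp add: mod_Suc_eq)
  have adj: "X (R x) (C y) \<and> X (R y) (C x)" if "y = x + d" "2 \<le> d" "d \<le> 5" for x y d
  proof -
    let ?a = "x mod k" and ?b = "y mod k"
    have ab: "?a \<noteq> ?b" using modne[of d k x] that k7 by auto
    have n1: "?b \<noteq> (?a + 1) mod k" unfolding mk using modne[of "d - 1" k "x + 1"] that k7 by auto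
    have n2: "?a \<noteq> (?b + 1) mod k" unfolding mk using modne[of "d + 1" k x] that k7
      by (auto simp: add.assoc)
    have "rc_adj X m n (v ?a) (v ?b)" using ah ab n1 n2 kpos by auto
    moreover have "v ?a \<noteq> v ?b" using inj ab kpos unfolding inj_on_def by auto
    ultimately show ?thesis using rc_adj_iff ws unfolding R_def C_def w_def by auto
  qed
  have nadj: "\<not> (X (R x) (C (Suc x)) \<and> X (R (Suc x)) (C x))" for x
  proof -
    let ?a = "x mod k" and ?b = "(Suc x) mod k"
    have ab: "?a \<noteq> ?b" using modne[of 1 k x] k7 by auto
    have e: "?b = (?a + 1) mod k" using mk by simp
    have "\<not> rc_adj X m n (v ?a) (v ?b)" using ah ab e kpos by auto
    moreover have "v ?a \<noteq> v ?b" using inj ab kpos unfolding inj_on_def by auto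
    ultimately show ?thesis using rc_adj_iff ws unfolding R_def C_def w_def by auto
  qed
  define P where "P x = X (R x) (C (Suc x))" for x
  have "P (x + k) = P x" for x unfolding P_def R_def C_def
    using wk[of x] wk[of "Suc x"] by simp
  then obtain a where pa: "P a = P (Suc a)" using parity[OF ok] by blast
  show ?thesis
  proof (cases "P a")
    case False
    then have z: "\<not> X (R a) (C (a+1))" "\<not> X (R (a+1)) (C (a+2))"
      using pa unfolding P_def by (auto simp: numeral_eq_Suc)
    have zz: "\<not> X (R (a+4)) (C (a+5)) \<or> \<not> X (R (a+5)) (C (a+4))"
      using nadj[of "a+4"] by (simp add: numeral_eq_Suc)
    show ?thesis
      apply (rule core[of "R a" m "R (a+1)" "R (a+4)" "R (a+5)" "C (a+1)" n "C (a+2)" "C (a+4)" "C (a+5)"])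
      using bds z zz adj[of "a+2" a 2] adj[of "a+4" a 4] adj[of "a+5" a 5]
        adj[of "a+4" "a+1" 3] adj[of "a+5" "a+1" 4] adj[of "a+4" "a+2" 2] adj[of "a+5" "a+2" 3]
      by (auto simp: numeral_eq_Suc)
  next
    case True
    then have z0: "X (R a) (C (a+1))" "X (R (a+1)) (C (a+2))"
      using pa unfolding P_def by (auto simp: numeral_eq_Suc)
    define b where "b = a + k - 3"
    have e: "b + 3 = a + k" "b + 4 = (a + 1) + k" "b + 5 = (a + 2) + k" unfolding b_def using k7 by auto
    have z: "\<not> X (R (b+4)) (C (b+3))" "\<not> X (R (b+5)) (C (b+4))"
      using z0 nadj[of a] nadj[of "a+1"] unfolding e R_def C_def wk by (auto simp: numeral_eq_Suc)
    have zz: "\<not> X (R (b+1)) (C b) \<or> \<not> X (R b) (C (b+1))"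
      using nadj[of b] by (simp, blast)
    show ?thesis
      apply (rule core[of "R (b+5)" m "R (b+4)" "R (b+1)" "R b" "C (b+4)" n "C (b+3)" "C (b+1)" "C b"])
      using bds z zz adj[of "b+5" "b+3" 2] adj[of "b+5" "b+1" 4] adj[of "b+5" b 5]
        adj[of "b+4" "b+1" 3] adj[of "b+4" b 4] adj[of "b+3" "b+1" 2] adj[of "b+3" b 3]
      by auto
  qed
qed

end
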